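(* The vector space $\mathcal{PA}$ can be naturally identified with the quotient $\mathcal{MPT}/[\mathcal{MPT},\mathcal{MPT}]$, where $[\mathcal{MPT},\mathcal{MPT}]$ is the span of the commutators $a\circ b-b\circ a$ with $a,b\in\mathcal{MPT}$. Under this identification, the map $\tau$ is the natural projection $\mathcal{MPT}\to\mathcal{MPT}/[\mathcal{MPT},\mathcal{MPT}]$; equivalently, $\tau:\mathcal{MPT}\to\mathcal{PA}$ is surjective with kernel $[\mathcal{MPT},\mathcal{MPT}]$.
   Context: Work over a fixed ground field. A planar rooted tree is a finite rooted tree, with edges oriented away from the root, together with a total order on the outgoing edges of each vertex. A planar aroma is an isomorphism class of finite connected directed graphs (loops allowed) in which every vertex has exactly one incoming edge, together with a total order on the outgoing edges of each vertex. $\mathcal{PA}$ denotes the span of planar aromas. A marked planar tree is a triple $(v,n,t)$, where $t$ is a planar tree, $v$ is a vertex of $t$, and $n\in\{1,\dots,|v|+1\}$ with $|v|$ the number of outgoing edges of $v$. $\mathcal{MPT}$ is the vector space spanned by marked planar trees. For planar trees $s,t$, $s\rhd_{v,n}t$ denotes the planar tree obtained by adding an edge from the vertex $v$ of $t$ to the root of $s$, inserted as the $n$-th outgoing edge of $v$. The marked planar tree $(v,n,t)$ represents the map $s\mapsto s\rhd_{v,n}t$. Composition of these maps gives the product \[ (v_1,n_1,t_1)\circ(v_2,n_2,t_2)=(v_2,n_2,\,t_2\rhd_{v_1,n_1}t_1) \] on $\mathcal{MPT}$. The linear map $\tau:\mathcal{MPT}\to\mathcal{PA}$ sends $(v,n,t)$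 to the planar aroma obtained from $t$ by adding an edge from $v$ to the root of $t$, inserted as the $n$-th outgoing edge of $v$. *)

theory Defs
  imports Main HOL.Modules "HOL-Library.Poly_Mapping"
begin

text \<open>A planar rooted tree (up to isomorphism) is a node with an ordered list of subtrees.
 Vertices are addressed by paths (0-based child indices from the root).\<close>

datatype ptree = Node "ptree list"

fun children :: "ptree \<Rightarrow> ptree list" where
  "children (Node ts) = ts"

lemma size_nth_less: "i < length ts \<Longrightarrow> size (ts ! i) < Suc (size_list size ts)"
  using size_list_estimation'[of "ts ! i" ts "size (ts ! i)" size] nth_mem[of i ts] by simp

function subtree :: "ptree \<Rightarrow> nat list \<Rightarrow> ptree option" where
  "subtree t [] = Some t"
| "subtree (Node ts) (i # p) = (if i < length ts then subtree (ts ! i) p else None)"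
  by pat_completeness auto
termination
  by (relation "measure (size \<circ> fst)") (auto dest: size_nth_less)

definition vertices :: "ptree \<Rightarrow> nat list set" where
  "vertices t = {p. subtree t p \<noteq> None}"

definition arity :: "ptree \<Rightarrow> nat list \<Rightarrow> nat" where
  "arity t v = length (children (the (subtree t v)))"

text \<open>graft s v n t = s \<rhd>_{v,n} t: add an edge from vertex v of t to the root of s,
  inserted as the n-th (1-based) outgoing edge of v.\<close>
function graft :: "ptree \<Rightarrow> nat list \<Rightarrow> nat \<Rightarrow> ptree \<Rightarrow> ptree" where
  "graft s [] n (Node ts) = Node (take (n - 1) ts @ s # drop (n - 1) ts)"
| "graft s (i # p) n (Node ts) =
     (if i < length ts then Node (ts[i := graft s p n (ts ! i)]) else Node ts)"
  by pat_completeness auto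
termination
  by (relation "measure (\<lambda>(s, p, n, t). size t)") (auto dest: size_nth_less)

definition marked :: "(nat list \<times> nat \<times> ptree) set" where
  "marked = {(v, n, t). v \<in> vertices t \<and> 1 \<le> n \<and> n \<le> arity t v + 1}"

typedef mpt = marked
  morphisms rep_mpt abs_mpt
  by (rule exI[of _ "([], 1, Node [])"]) (simp add: marked_def vertices_def arity_def)

text \<open>Product of basis elements: (v1,n1,t1) \<circ> (v2,n2,t2) = (v2,n2, t2 \<rhd>_{v1,n1} t1),
  where the vertex v2 of t2 is taken as the corresponding vertex of the grafted tree,
  namely the path v1 @ [n1-1] @ v2.\<close>
definition mpt_comp0 :: "mpt \<Rightarrow> mpt \<Rightarrow> mpt" where
  "mpt_comp0 a b = (case (rep_mpt a, rep_mpt b) of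
     ((v1, n1, t1), (v2, n2, t2)) \<Rightarrow> abs_mpt (v1 @ [n1 - 1] @ v2, n2, graft t2 v1 n1 t1))"

definition mpt_comp :: "(mpt \<Rightarrow>\<^sub>0 'k::field) \<Rightarrow> (mpt \<Rightarrow>\<^sub>0 'k) \<Rightarrow> (mpt \<Rightarrow>\<^sub>0 'k)" where
  "mpt_comp a b = (\<Sum>x\<in>Poly_Mapping.keys a. \<Sum>y\<in>Poly_Mapping.keys b.
       Poly_Mapping.single (mpt_comp0 x y) (Poly_Mapping.lookup a x * Poly_Mapping.lookup b y))"

definition fscale :: "'k::field \<Rightarrow> ('a \<Rightarrow>\<^sub>0 'k) \<Rightarrow> ('a \<Rightarrow>\<^sub>0 'k)" where
  "fscale c f = Poly_Mapping.map (\<lambda>x. c * x) f"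

definition mpt_commutators :: "(mpt \<Rightarrow>\<^sub>0 'k::field) set" where
  "mpt_commutators = module.span fscale {mpt_comp a b - mpt_comp b a | a b. True}"

text \<open>A (concrete) planar aroma graph: a finite nonempty vertex set V (vertex names drawn
  from the countably infinite type nat list) and for each vertex the ordered list of targets
  of its outgoing edges.\<close>
type_synonym pgraph = "nat list set \<times> (nat list \<Rightarrow> nat list list)"

definition pg_edges :: "pgraph \<Rightarrow> (nat list \<times> nat list) set" where
  "pg_edges G = {(x, y). x \<in> fst G \<and> y \<in> set (snd G x)}"

definition raw_aroma :: "pgraph \<Rightarrow> bool" where
  "raw_aroma G \<longleftrightarrow> (case G of (V, ch) \<Rightarrow>
      finite V \<and> V \<noteq> {}
    \<and> (\<forall>x\<in>V. set (ch x) \<subseteq> V)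
    \<and> (\<forall>x. x \<notin> V \<longrightarrow> ch x = [])
    \<and> (\<forall>y\<in>V. (\<Sum>x\<in>V. count_list (ch x) y) = 1)
    \<and> (\<forall>x\<in>V. \<forall>y\<in>V. (x, y) \<in> (pg_edges G \<union> (pg_edges G)\<inverse>)\<^sup>*))"

definition pg_iso :: "pgraph \<Rightarrow> pgraph \<Rightarrow> bool" where
  "pg_iso G H \<longleftrightarrow> (\<exists>f. bij_betw f (fst G) (fst H) \<and>
      (\<forall>x\<in>fst G. snd H (f x) = map f (snd G x)))"

definition aroma_class :: "pgraph \<Rightarrow> pgraph set" where
  "aroma_class G = {H. raw_aroma H \<and> pg_iso G H}"

definition loop_graph :: pgraph where
  "loop_graph = ({[]}, \<lambda>x. if x = [] then [[]] else [])"

typedef aroma = "{A. \<exists>G. raw_aroma G \<and> A = aroma_class G}"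
  morphisms rep_aroma abs_aroma
proof
  have "raw_aroma loop_graph"
    unfolding raw_aroma_def loop_graph_def by auto
  then show "aroma_class loop_graph \<in> {A. \<exists>G. raw_aroma G \<and> A = aroma_class G}" by blast
qed

text \<open>The graph of a tree t with an extra edge from v to the root, inserted as the n-th
  outgoing edge of v. Vertices are the paths of t; the root is [].\<close>
definition tree_graph :: "nat list \<times> nat \<times> ptree \<Rightarrow> pgraph" where
  "tree_graph m = (case m of (v, n, t) \<Rightarrow>
     (vertices t, \<lambda>p. if p \<in> vertices t then
        (let cs = map (\<lambda>i. p @ [i]) [0..<arity t p] in
          if p = v then take (n - 1) cs @ [] # drop (n - 1) cs else cs)
      else []))"

definition tau0 :: "mpt \<Rightarrow> aroma" where
  "tau0 m = abs_aroma (aroma_class (tree_graph (rep_mpt m)))"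

definition tau :: "(mpt \<Rightarrow>\<^sub>0 'k::field) \<Rightarrow> (aroma \<Rightarrow>\<^sub>0 'k)" where
  "tau f = (\<Sum>x\<in>Poly_Mapping.keys f. Poly_Mapping.single (tau0 x) (Poly_Mapping.lookup f x))"

end

theory Submission
  imports Defs "HOL-Library.Sublist"
begin

lemma subtree_single: "subtree a [i] = (if i < length (children a) then Some (children a ! i) else None)"
  by (cases a) simp

lemma subtree_append: "subtree t (p @ q) = (case subtree t p of None \<Rightarrow> None | Some s \<Rightarrow> subtree s q)"
  by (induction t p rule: subtree.induct) auto

lemma vertices_Nil[simp]: "[] \<in> vertices t"
  by (simp add: vertices_def)

lemma vertices_Node_Cons[simp]: "i # p \<in> vertices (Node ts) \<longleftrightarrow> i < length ts \<and> p \<in> vertices (ts ! i)"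
  by (simp add: vertices_def)

lemma vertices_prefix: "p @ q \<in> vertices t \<Longrightarrow> p \<in> vertices t"
  by (auto simp: vertices_def subtree_append split: option.splits)

lemma vertices_snoc: "p @ [i] \<in> vertices t \<longleftrightarrow> p \<in> vertices t \<and> i < arity t p"
  by (cases "subtree t p") (auto simp: vertices_def arity_def subtree_append subtree_single split: option.splits)

lemma arity_Nil: "arity (Node ts) [] = length ts" by (simp add: arity_def)
lemma arity_Cons: "i < length ts \<Longrightarrow> arity (Node ts) (i # p) = arity (ts ! i) p"
  by (simp add: arity_def)

lemma finite_vertices: "finite (vertices t)"
proof (induction t)
  case (Node ts)
  have "vertices (Node ts) \<subseteq> insert [] (\<Union>i<length ts. (\<lambda>p. i # p) ` vertices (ts ! i))"
  proof
    fix x assume "x \<in> vertices (Node ts)" then show "x \<in> insert [] (\<Union>i<length ts. (\<lambda>p. i # p) ` vertices (ts ! i))"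
      by (cases x) auto
  qed
  moreover have "finite (\<Union>i<length ts. (\<lambda>p. i # p) ` vertices (ts ! i))"
    using Node by auto
  ultimately show ?case by (meson finite_insert finite_subset)
qed

lemma vertices_inj: "vertices t = vertices t' \<Longrightarrow> t = t'"
proof (induction t arbitrary: t')
  case (Node ts)
  obtain ts' where t': "t' = Node ts'" by (cases t')
  have len: "length ts = length ts'"
  proof -
    have "[i] \<in> vertices (Node ts) \<longleftrightarrow> [i] \<in> vertices (Node ts')" for i using Node.prems t' by simp
    then have "i < length ts \<longleftrightarrow> i < length ts'" for i by simp
    then show ?thesis by (meson linorder_neqE_nat less_irrefl)
  qed
  have "ts ! i = ts' ! i" if "i < length ts" for i
  proof -
    have "p \<in> vertices (ts ! i) \<longleftrightarrow> p \<in> vertices (ts' ! i)" for p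
      using Node.prems t' that len
      by (metis vertices_Node_Cons)
    then have "vertices (ts ! i) = vertices (ts' ! i)" by auto
    then show ?thesis by (rule Node.IH[OF nth_mem[OF that]])
  qed
  then show ?case using t' len by (simp add: list_eq_iff_nth_eq)
qed

fun ins :: "nat list \<Rightarrow> nat \<Rightarrow> nat list \<Rightarrow> nat list" where
  "ins [] n [] = []"
| "ins [] n (i # r) = (if n - 1 \<le> i then Suc i else i) # r"
| "ins (j # v) n [] = []"
| "ins (j # v) n (i # r) = i # (if i = j then ins v n r else r)"

lemma ins_Nil[simp]: "ins v n [] = []" by (cases v) auto

lemma ins_eq_Nil[simp]: "ins v n p = [] \<longleftrightarrow> p = []"
  by (cases v; cases p) auto

lemma ins_inj: "ins v n p = ins v n q \<Longrightarrow> p = q"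
proof (induction v arbitrary: p q)
  case Nil then show ?case
    by (cases p; cases q) (simp_all split: if_splits)
next
  case (Cons j v)
  show ?case
  proof (cases p)
    case Nil then show ?thesis using Cons.prems by (cases q) simp_all
  next
    case (Cons i r)
    then show ?thesis using Cons.prems Cons.IH[of r]
      by (cases q) (simp_all split: if_splits)
  qed
qed

lemma ins_ne: "ins v n p \<noteq> v @ (n - 1) # q"
proof (induction v arbitrary: p)
  case Nil then show ?case by (cases p) simp_all
next
  case (Cons j v) then show ?case by (cases p) simp_all
qed

lemma ins_self[simp]: "ins v n v = v"
  by (induction v) auto

lemma ins_snoc: "ins v n (p @ [i]) = (if p = v then v @ [if n - 1 \<le> i then Suc i else i] else ins v n p @ [i])"
proof (induction v arbitrary: p)
  case Nil then show ?case by (cases p) simp_all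
next
  case (Cons j v) then show ?case by (cases p) simp_all
qed

lemma graft_E2:
  "v \<in> vertices t \<Longrightarrow> n \<le> arity t v + 1 \<Longrightarrow> subtree (graft s v n t) (v @ (n - 1) # q) = subtree s q"
proof (induction v arbitrary: t)
  case Nil
  then obtain ts where t: "t = Node ts" by (cases t)
  with Nil have le: "n - 1 \<le> length ts" by (simp add: arity_Nil)
  then have "(take (n - 1) ts @ s # drop (n - 1) ts) ! (n - 1) = s"
    by (simp add: nth_append)
  with le t show ?case by simp
next
  case (Cons j v)
  then obtain ts where t: "t = Node ts" by (cases t)
  with Cons.prems have j: "j < length ts" "v \<in> vertices (ts ! j)" "n \<le> arity (ts ! j) v + 1"
    by (simp_all add: arity_Cons)
  then show ?case using t Cons.IH[OF j(2,3)] by simp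
qed

lemma graft_E1:
  "v \<in> vertices t \<Longrightarrow> n \<le> arity t v + 1 \<Longrightarrow> p \<in> vertices t \<Longrightarrow>
   subtree (graft s v n t) (ins v n p) =
     Some (if prefix p v then graft s (drop (length p) v) n (the (subtree t p)) else the (subtree t p))"
proof (induction v arbitrary: t p)
  case Nil
  then obtain ts where t: "t = Node ts" by (cases t)
  with Nil have le: "n - 1 \<le> length ts" by (simp add: arity_Nil)
  show ?case
  proof (cases p)
    case Nil then show ?thesis using t by simp
  next
    case (Cons i r)
    with Nil.prems t have i: "i < length ts" "r \<in> vertices (ts ! i)" by simp_all
    define i' where "i' = (if n - 1 \<le> i then Suc i else i)"
    define L where "L = take (n - 1) ts @ s # drop (n - 1) ts"
    have len: "i' < length L" using i le by (simp add: i'_def L_def)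
    have Li: "L ! i' = ts ! i"
      using i le by (auto simp: i'_def L_def nth_append min_def)
    have "subtree (ts ! i) r \<noteq> None" using i(2) by (simp add: vertices_def)
    moreover have "graft s [] n t = Node L" "ins [] n p = i' # r"
      using t Cons by (simp_all add: L_def i'_def)
    ultimately show ?thesis using Cons t len Li i
      by (simp del: graft.simps ins.simps)
  qed
next
  case (Cons j v)
  then obtain ts where t: "t = Node ts" by (cases t)
  with Cons.prems have j: "j < length ts" "v \<in> vertices (ts ! j)" "n \<le> arity (ts ! j) v + 1"
    by (simp_all add: arity_Cons)
  show ?case
  proof (cases p)
    case Nil then show ?thesis using t by simp
  next
    case (Cons i r)
    with Cons.prems t have i: "i < length ts" "r \<in> vertices (ts ! i)" by simp_all
    have "subtree (ts ! i) r \<noteq> None" using i(2) by (simp add: vertices_def)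
    moreover have "i = j \<Longrightarrow> subtree (graft s v n (ts ! j)) (ins v n r) =
     Some (if prefix r v then graft s (drop (length r) v) n (the (subtree (ts ! j) r)) else the (subtree (ts ! j) r))"
      using Cons.IH[OF j(2,3)] i by simp
    ultimately show ?thesis using Cons t i j
      by auto
  qed
qed

lemma graft_vertices_sub:
  "v \<in> vertices t \<Longrightarrow> n \<le> arity t v + 1 \<Longrightarrow> q \<in> vertices (graft s v n t) \<Longrightarrow>
   q \<in> ins v n ` vertices t \<or> (\<exists>r \<in> vertices s. q = v @ (n - 1) # r)"
proof (induction v arbitrary: t q)
  case Nil
  then obtain ts where t: "t = Node ts" by (cases t)
  with Nil have le: "n - 1 \<le> length ts" by (simp add: arity_Nil)
  define L where "L = take (n - 1) ts @ s # drop (n - 1) ts"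
  have g: "graft s [] n t = Node L" using t by (simp add: L_def)
  show ?case
  proof (cases q)
    case Nil then show ?thesis by (metis image_eqI ins_Nil vertices_Nil)
  next
    case (Cons i r)
    with Nil.prems g have i: "i < length L" "r \<in> vertices (L ! i)" by simp_all
    consider "i < n - 1" | "i = n - 1" | "i > n - 1" by linarith
    then show ?thesis
    proof cases
      case 1
      then have "L ! i = ts ! i" "i < length ts" using le i by (auto simp: L_def nth_append)
      then have "i # r \<in> vertices t" "ins [] n (i # r) = q" using i 1 t Cons by auto
      then show ?thesis by blast
    next
      case 2
      then have "L ! i = s" using le by (simp add: L_def nth_append)
      then show ?thesis using i 2 Cons by auto
    next
      case 3
      then have "L ! i = ts ! (i - 1)" "i - 1 < length ts" using le i
        by (auto simp: L_def nth_append min_def split: if_splits)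
      moreover have "ins [] n ((i - 1) # r) = q" using 3 Cons by auto
      ultimately have "(i - 1) # r \<in> vertices t" "ins [] n ((i - 1) # r) = q" using i t by auto
      then show ?thesis by blast
    qed
  qed
next
  case (Cons j v)
  then obtain ts where t: "t = Node ts" by (cases t)
  with Cons.prems have j: "j < length ts" "v \<in> vertices (ts ! j)" "n \<le> arity (ts ! j) v + 1"
    by (simp_all add: arity_Cons)
  show ?case
  proof (cases q)
    case Nil then show ?thesis by (metis image_eqI ins_Nil vertices_Nil)
  next
    case (Cons i r)
    show ?thesis
    proof (cases "i = j")
      case True
      with Cons Cons.prems t j have r: "r \<in> vertices (graft s v n (ts ! j))" by simp
      from Cons.IH[OF j(2,3) r] show ?thesis
      proof
        assume "r \<in> ins v n ` vertices (ts ! j)"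
        then obtain r' where "r' \<in> vertices (ts ! j)" "r = ins v n r'" by blast
        then have "j # r' \<in> vertices t" "ins (j # v) n (j # r') = q" using t j Cons True by auto
        then show ?thesis by blast
      qed (use Cons True in auto)
    next
      case False
      with Cons Cons.prems t j have r: "i < length ts" "r \<in> vertices (ts ! i)" by auto
      then have "i # r \<in> vertices t" "ins (j # v) n (i # r) = q" using t False Cons by auto
      then show ?thesis by blast
    qed
  qed
qed

lemma graft_vertices:
  assumes "v \<in> vertices t" "n \<le> arity t v + 1"
  shows "vertices (graft s v n t) = ins v n ` vertices t \<union> (\<lambda>r. v @ (n - 1) # r) ` vertices s"
proof
  show "vertices (graft s v n t) \<subseteq> ins v n ` vertices t \<union> (\<lambda>r. v @ (n - 1) # r) ` vertices s"
    using graft_vertices_sub[OF assms] by blast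
  show "ins v n ` vertices t \<union> (\<lambda>r. v @ (n - 1) # r) ` vertices s \<subseteq> vertices (graft s v n t)"
    using graft_E1[OF assms] graft_E2[OF assms] by (auto simp: vertices_def)
qed

lemma children_graft_Cons: "length (children (graft s (j # w) n t)) = length (children t)"
  by (cases t) simp

lemma children_graft_Nil: "length (children (graft s [] n t)) = Suc (length (children t))"
  by (cases t) simp

lemma arity_graft_E1:
  assumes "v \<in> vertices t" "n \<le> arity t v + 1" "p \<in> vertices t"
  shows "arity (graft s v n t) (ins v n p) = arity t p + (if p = v then 1 else 0)"
proof -
  note E = graft_E1[OF assms]
  show ?thesis
  proof (cases "prefix p v")
    case True
    show ?thesis
    proof (cases "p = v")
      case True then show ?thesis using E by (simp add: arity_def children_graft_Nil)
    next
      case False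
      with \<open>prefix p v\<close> obtain j w where "drop (length p) v = j # w"
        by (metis prefix_def append_eq_conv_conj append_self_conv neq_Nil_conv)
      then show ?thesis using E True False by (simp add: arity_def children_graft_Cons)
    qed
  next
    case False
    then have "p \<noteq> v" by auto
    then show ?thesis using E False by (simp add: arity_def)
  qed
qed

lemma arity_graft_E2:
  assumes "v \<in> vertices t" "n \<le> arity t v + 1"
  shows "arity (graft s v n t) (v @ (n - 1) # q) = arity s q"
  using graft_E2[OF assms] by (simp add: arity_def)

lemma vertices_graft_E2:
  assumes "v \<in> vertices t" "n \<le> arity t v + 1"
  shows "v @ (n - 1) # q \<in> vertices (graft s v n t) \<longleftrightarrow> q \<in> vertices s"
  using graft_E2[OF assms] by (simp add: vertices_def)

lemma vertices_graft_E1: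
  assumes "v \<in> vertices t" "n \<le> arity t v + 1" "p \<in> vertices t"
  shows "ins v n p \<in> vertices (graft s v n t)"
  using graft_E1[OF assms] by (simp add: vertices_def)

definition chl :: "nat list \<Rightarrow> nat \<Rightarrow> ptree \<Rightarrow> nat list \<Rightarrow> nat list list" where
  "chl v n t p = (let cs = map (\<lambda>i. p @ [i]) [0..<arity t p] in
          if p = v then take (n - 1) cs @ [] # drop (n - 1) cs else cs)"

lemma tg_fst[simp]: "fst (tree_graph (v, n, t)) = vertices t"
  by (simp add: tree_graph_def)

lemma tg_snd: "p \<in> vertices t \<Longrightarrow> snd (tree_graph (v, n, t)) p = chl v n t p"
  by (simp add: tree_graph_def chl_def)

lemma tg_snd_out: "p \<notin> vertices t \<Longrightarrow> snd (tree_graph (v, n, t)) p = []"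
  by (simp add: tree_graph_def)

lemma upt_split_map:
  assumes "k \<le> a"
  shows "map f [0..<Suc a] = map f [0..<k] @ f k # map (\<lambda>i. f (Suc i)) [k..<a]"
proof -
  have "[0..<Suc a] = [0..<k] @ [k..<Suc a]"
    using assms upt_add_eq_append[of 0 k "Suc a - k"] by simp
  also have "[k..<Suc a] = k # [Suc k..<Suc a]" using assms by (simp add: upt_conv_Cons)
  finally have "[0..<Suc a] = [0..<k] @ k # [Suc k..<Suc a]" .
  moreover have "[Suc k..<Suc a] = map Suc [k..<a]" by (simp add: map_Suc_upt)
  ultimately show ?thesis by simp
qed

lemma comp_marked:
  assumes a: "v1 \<in> vertices t1" "n1 \<le> arity t1 v1 + 1"
      and b: "v2 \<in> vertices t2" "1 \<le> n2" "n2 \<le> arity t2 v2 + 1"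
  shows "(v1 @ (n1 - 1) # v2, n2, graft t2 v1 n1 t1) \<in> marked"
  using b vertices_graft_E2[OF a] arity_graft_E2[OF a] by (simp add: marked_def)

lemma comp_chl_E1:
  assumes a: "v1 \<in> vertices t1" "1 \<le> n1" "n1 \<le> arity t1 v1 + 1" and p: "p \<in> vertices t1"
  shows "chl (v1 @ (n1 - 1) # v2) n2 (graft t2 v1 n1 t1) (ins v1 n1 p) =
     map (\<lambda>c. if c = [] then v1 @ [n1 - 1] else ins v1 n1 c) (chl v1 n1 t1 p)"
proof -
  have ne: "ins v1 n1 p \<noteq> v1 @ (n1 - 1) # v2" by (rule ins_ne)
  note ar = arity_graft_E1[OF a(1,3) p, of t2]
  show ?thesis
  proof (cases "p = v1")
    case False
    then show ?thesis using ne ar by (simp add: chl_def ins_snoc)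
  next
    case True
    have k: "n1 - 1 \<le> arity t1 v1" using a by simp
    have "map (\<lambda>i. v1 @ [i]) [0..<Suc (arity t1 v1)] =
      map (\<lambda>i. v1 @ [i]) [0..<n1 - 1] @ (v1 @ [n1 - 1]) # map (\<lambda>i. v1 @ [Suc i]) [n1 - 1..<arity t1 v1]"
      by (rule upt_split_map[OF k])
    moreover have "map (\<lambda>x. v1 @ [if n1 - 1 \<le> x then Suc x else x]) [0..<n1 - 1] = map (\<lambda>x. v1 @ [x]) [0..<n1 - 1]"
      by (rule map_cong) auto
    moreover have "map (\<lambda>x. v1 @ [if n1 - 1 \<le> x then Suc x else x]) [n1 - 1..<arity t1 v1] = map (\<lambda>x. v1 @ [Suc x]) [n1 - 1..<arity t1 v1]"
      by (rule map_cong) auto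
    ultimately show ?thesis using ne ar True k
      by (simp add: chl_def ins_snoc take_map drop_map)
  qed
qed

lemma comp_chl_E2:
  assumes a: "v1 \<in> vertices t1" "n1 \<le> arity t1 v1 + 1" and q: "q \<in> vertices t2"
  shows "chl (v1 @ (n1 - 1) # v2) n2 (graft t2 v1 n1 t1) (v1 @ (n1 - 1) # q) =
     map (\<lambda>c. if c = [] then [] else v1 @ (n1 - 1) # c) (chl v2 n2 t2 q)"
  using arity_graft_E2[OF a, of t2 q]
  by (simp add: chl_def take_map drop_map Let_def)
definition isom :: "(nat list \<Rightarrow> nat list) \<Rightarrow> pgraph \<Rightarrow> pgraph \<Rightarrow> bool" where
  "isom f G H \<longleftrightarrow> bij_betw f (fst G) (fst H) \<and> (\<forall>x\<in>fst G. snd H (f x) = map f (snd G x))"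

definition gclosed :: "pgraph \<Rightarrow> bool" where
  "gclosed G \<longleftrightarrow> (\<forall>x\<in>fst G. set (snd G x) \<subseteq> fst G)"

lemma pg_iso_isom: "pg_iso G H \<longleftrightarrow> (\<exists>f. isom f G H)"
  by (simp add: pg_iso_def isom_def)

lemma isom_id: "isom (\<lambda>x. x) G G"
  by (simp add: isom_def bij_betw_def)

lemma isom_comp: "isom f G H \<Longrightarrow> isom g H K \<Longrightarrow> isom (g \<circ> f) G K"
  unfolding isom_def
  by (auto intro: bij_betw_trans dest: bij_betwE)

lemma isom_inv:
  assumes "isom f G H" "gclosed G"
  shows "isom (the_inv_into (fst G) f) H G"
proof -
  have b: "bij_betw f (fst G) (fst H)" and c: "\<And>x. x\<in>fst G \<Longrightarrow> snd H (f x) = map f (snd G x)"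
    using assms(1) by (auto simp: isom_def)
  have inj: "inj_on f (fst G)" using b by (simp add: bij_betw_def)
  have "snd G (the_inv_into (fst G) f y) = map (the_inv_into (fst G) f) (snd H y)" if y: "y \<in> fst H" for y
  proof -
    obtain x where x: "x \<in> fst G" "y = f x" using y b by (auto simp: bij_betw_def)
    have "map (the_inv_into (fst G) f) (snd H y) = map (the_inv_into (fst G) f \<circ> f) (snd G x)"
      using c x by simp
    also have "\<dots> = snd G x"
    proof (rule map_idI)
      fix z assume "z \<in> set (snd G x)"
      then have "z \<in> fst G" using assms(2) x by (auto simp: gclosed_def)
      then show "(the_inv_into (fst G) f \<circ> f) z = z" using inj by (simp add: the_inv_into_f_f)
    qed
    finally show ?thesis using x inj by (simp add: the_inv_into_f_f)
  qed
  then show ?thesis using b by (simp add: isom_def bij_betw_the_inv_into)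
qed

lemma marked_D: "(v, n, t) \<in> marked \<Longrightarrow> v \<in> vertices t \<and> 1 \<le> n \<and> n \<le> arity t v + 1"
  by (simp add: marked_def)

lemma chl_set_aux: "set (chl v n t p) \<subseteq> insert [] (set (map (\<lambda>i. p @ [i]) [0..<arity t p]))"
proof (cases "p = v")
  case True
  then have "chl v n t p = take (n - 1) (map (\<lambda>i. p @ [i]) [0..<arity t p]) @ [] # drop (n - 1) (map (\<lambda>i. p @ [i]) [0..<arity t p])"
    by (simp add: chl_def Let_def)
  then show ?thesis using set_take_subset[of "n - 1" "map (\<lambda>i. p @ [i]) [0..<arity t p]"]
      set_drop_subset[of "n - 1" "map (\<lambda>i. p @ [i]) [0..<arity t p]"] by auto
next
  case False then show ?thesis by (simp add: chl_def Let_def) blast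
qed

lemma chl_set: "p \<in> vertices t \<Longrightarrow> set (chl v n t p) \<subseteq> vertices t"
proof -
  assume p: "p \<in> vertices t"
  have "set (map (\<lambda>i. p @ [i]) [0..<arity t p]) \<subseteq> vertices t" using p by (auto simp: vertices_snoc)
  then show ?thesis using chl_set_aux[of v n t p] vertices_Nil[of t] by blast
qed

lemma tg_closed: "gclosed (tree_graph (v, n, t))"
  unfolding gclosed_def using chl_set by (auto simp: tg_snd)


lemma rotation_isom:
  assumes a: "(v1, n1, t1) \<in> marked" and b: "(v2, n2, t2) \<in> marked"
  shows "\<exists>g. isom g (tree_graph (v2 @ (n2 - 1) # v1, n1, graft t1 v2 n2 t2))
                    (tree_graph (v1 @ (n1 - 1) # v2, n2, graft t2 v1 n1 t1)) \<and> g [] = v1 @ [n1 - 1]"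
proof -
  note A = marked_D[OF a] and B = marked_D[OF b]
  define A1 where "A1 = vertices t1"
  define A2 where "A2 = vertices t2"
  define g where "g x = (if x \<in> ins v2 n2 ` A2 then v1 @ (n1 - 1) # the_inv_into A2 (ins v2 n2) x
                         else ins v1 n1 (drop (Suc (length v2)) x))" for x
  have inj2: "inj_on (ins v2 n2) A2" by (meson ins_inj inj_onI)
  have g1: "g (ins v2 n2 q) = v1 @ (n1 - 1) # q" if "q \<in> A2" for q
    using that inj2 by (simp add: g_def the_inv_into_f_f)
  have g2: "g (v2 @ (n2 - 1) # p) = ins v1 n1 p" for p
  proof -
    have "v2 @ (n2 - 1) # p \<notin> ins v2 n2 ` A2" using ins_ne by (metis imageE)
    then show ?thesis by (simp add: g_def)
  qed
  have VBA: "vertices (graft t1 v2 n2 t2) = ins v2 n2 ` A2 \<union> (\<lambda>r. v2 @ (n2 - 1) # r) ` A1"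
    using graft_vertices B by (simp add: A1_def A2_def)
  have VAB: "vertices (graft t2 v1 n1 t1) = ins v1 n1 ` A1 \<union> (\<lambda>r. v1 @ (n1 - 1) # r) ` A2"
    using graft_vertices A by (simp add: A1_def A2_def)
  have img: "g ` (ins v2 n2 ` A2 \<union> (\<lambda>r. v2 @ (n2 - 1) # r) ` A1) = ins v1 n1 ` A1 \<union> (\<lambda>r. v1 @ (n1 - 1) # r) ` A2"
  proof -
    have "g ` ins v2 n2 ` A2 = (\<lambda>r. v1 @ (n1 - 1) # r) ` A2"
      unfolding image_image by (rule image_cong) (simp_all add: g1)
    moreover have "g ` (\<lambda>r. v2 @ (n2 - 1) # r) ` A1 = ins v1 n1 ` A1"
      unfolding image_image by (rule image_cong) (simp_all add: g2[simplified])
    ultimately show ?thesis by (simp add: image_Un Un_commute)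
  qed
  have inj: "inj_on g (ins v2 n2 ` A2 \<union> (\<lambda>r. v2 @ (n2 - 1) # r) ` A1)"
  proof (rule inj_onI)
    fix x y assume x: "x \<in> ins v2 n2 ` A2 \<union> (\<lambda>r. v2 @ (n2 - 1) # r) ` A1"
      and y: "y \<in> ins v2 n2 ` A2 \<union> (\<lambda>r. v2 @ (n2 - 1) # r) ` A1" and e: "g x = g y"
    from x y e show "x = y"
    proof (cases "x \<in> ins v2 n2 ` A2")
      case True
      then obtain q where q: "q \<in> A2" "x = ins v2 n2 q" by blast
      show ?thesis
      proof (cases "y \<in> ins v2 n2 ` A2")
        case True
        then obtain q' where q': "q' \<in> A2" "y = ins v2 n2 q'" by blast
        then show ?thesis using q e g1 by simp
      next
        case False
        then obtain p' where p': "y = v2 @ (n2 - 1) # p'" using y by blast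
        then have "ins v1 n1 p' = v1 @ (n1 - 1) # q" using e q g1 g2 by simp
        then show ?thesis using ins_ne by blast
      qed
    next
      case False
      then obtain p where p: "x = v2 @ (n2 - 1) # p" using x by blast
      show ?thesis
      proof (cases "y \<in> ins v2 n2 ` A2")
        case True
        then obtain q' where q': "q' \<in> A2" "y = ins v2 n2 q'" by blast
        then have "ins v1 n1 p = v1 @ (n1 - 1) # q'" using e p g1 g2 by simp
        then show ?thesis using ins_ne by blast
      next
        case False
        then obtain p' where p': "y = v2 @ (n2 - 1) # p'" using y by blast
        then show ?thesis using p e g2 ins_inj by simp
      qed
    qed
  qed
  have bij: "bij_betw g (vertices (graft t1 v2 n2 t2)) (vertices (graft t2 v1 n1 t1))"
    unfolding VBA VAB bij_betw_def using inj img by simp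
  have com: "chl (v1 @ (n1 - 1) # v2) n2 (graft t2 v1 n1 t1) (g x) = map g (chl (v2 @ (n2 - 1) # v1) n1 (graft t1 v2 n2 t2) x)"
    if x: "x \<in> vertices (graft t1 v2 n2 t2)" for x
  proof -
    from x[unfolded VBA] show ?thesis
    proof
      assume "x \<in> ins v2 n2 ` A2"
      then obtain q where q: "q \<in> A2" "x = ins v2 n2 q" by blast
      have "map g (chl (v2 @ (n2 - 1) # v1) n1 (graft t1 v2 n2 t2) x) =
            map g (map (\<lambda>c. if c = [] then v2 @ [n2 - 1] else ins v2 n2 c) (chl v2 n2 t2 q))"
        using comp_chl_E1[of v2 t2 n2 q v1 n1 t1] B q by (simp add: A2_def)
      also have "\<dots> = map (\<lambda>c. if c = [] then [] else v1 @ (n1 - 1) # c) (chl v2 n2 t2 q)"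
        using chl_set[of q t2 v2 n2] q g2[of "[]"] by (auto simp: g1 A2_def)
      also have "\<dots> = chl (v1 @ (n1 - 1) # v2) n2 (graft t2 v1 n1 t1) (g x)"
        using comp_chl_E2[of v1 t1 n1 q t2 v2 n2] A q by (simp add: g1 A2_def)
      finally show ?thesis by simp
    next
      assume "x \<in> (\<lambda>r. v2 @ (n2 - 1) # r) ` A1"
      then obtain p where p: "p \<in> A1" "x = v2 @ (n2 - 1) # p" by blast
      have "map g (chl (v2 @ (n2 - 1) # v1) n1 (graft t1 v2 n2 t2) x) =
            map g (map (\<lambda>c. if c = [] then [] else v2 @ (n2 - 1) # c) (chl v1 n1 t1 p))"
        using comp_chl_E2[of v2 t2 n2 p t1 v1 n1] B p by (simp add: A1_def)
      also have "\<dots> = map (\<lambda>c. if c = [] then v1 @ [n1 - 1] else ins v1 n1 c) (chl v1 n1 t1 p)"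
        using g1[of "[]"] by (auto simp: g2[simplified] A2_def)
      also have "\<dots> = chl (v1 @ (n1 - 1) # v2) n2 (graft t2 v1 n1 t1) (g x)"
        using comp_chl_E1[of v1 t1 n1 p v2 n2 t2] A p by (simp add: g2[simplified] A1_def)
      finally show ?thesis by simp
    qed
  qed
  have "isom g (tree_graph (v2 @ (n2 - 1) # v1, n1, graft t1 v2 n2 t2))
                    (tree_graph (v1 @ (n1 - 1) # v2, n2, graft t2 v1 n1 t1))"
    unfolding isom_def using bij com bij_betwE[OF bij]
    by (simp add: tg_snd)
  moreover have "g [] = v1 @ [n1 - 1]" using g1[of "[]"] by (simp add: A2_def)
  ultimately show ?thesis by blast
qed
lemma set_take_Cons_drop: "set (take k xs @ a # drop k xs) = insert a (set xs)"
proof -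
  have "set xs = set (take k xs) \<union> set (drop k xs)" by (metis append_take_drop_id set_append)
  then show ?thesis by auto
qed

lemma chl_set_eq: "set (chl v n t p) = (if p = v then insert [] (set (map (\<lambda>i. p @ [i]) [0..<arity t p]))
      else set (map (\<lambda>i. p @ [i]) [0..<arity t p]))"
  unfolding chl_def Let_def by (cases "p = v") (simp_all add: set_take_Cons_drop del: set_append)

lemma chl_mem: "q \<in> set (chl v n t p) \<longleftrightarrow> (q = [] \<and> p = v) \<or> (\<exists>i < arity t p. q = p @ [i])"
  unfolding chl_set_eq by auto

lemma chl_filter: "filter (\<lambda>c. c \<noteq> []) (chl v n t p) = map (\<lambda>i. p @ [i]) [0..<arity t p]"
proof -
  define cs where "cs = map (\<lambda>i. p @ [i]) [0..<arity t p]"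
  have f: "filter (\<lambda>c. c \<noteq> []) cs = cs" by (simp add: cs_def filter_id_conv)
  have "filter (\<lambda>c. c \<noteq> []) (take k cs @ [] # drop k cs) = filter (\<lambda>c. c \<noteq> []) (take k cs @ drop k cs)" for k
    by (simp only: filter_append) simp
  then show ?thesis using f unfolding chl_def Let_def cs_def[symmetric] by simp
qed

lemma chl_distinct: "distinct (chl v n t p)"
proof -
  have d: "distinct (map (\<lambda>i. p @ [i]) [0..<arity t p])" by (simp add: distinct_map inj_on_def)
  have "[] \<notin> set (map (\<lambda>i. p @ [i]) [0..<arity t p])" by auto
  have aux: "distinct (take k xs @ a # drop k xs)" if "distinct xs" "a \<notin> set xs" for k a and xs :: "nat list list"
  proof -
    have "distinct (take k xs @ drop k xs)" using that by simp
    then show ?thesis using that by (auto simp del: append_take_drop_id dest: in_set_takeD in_set_dropD)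
  qed
  show ?thesis
  proof (cases "p = v")
    case True then show ?thesis using aux[OF d \<open>[] \<notin> _\<close>] by (simp add: chl_def Let_def)
  next
    case False then show ?thesis using d by (simp add: chl_def Let_def)
  qed
qed

lemma tg_edges: "(p, q) \<in> pg_edges (tree_graph (v, n, t)) \<longleftrightarrow>
   p \<in> vertices t \<and> ((q = [] \<and> p = v) \<or> (\<exists>i < arity t p. q = p @ [i]))"
  by (auto simp: pg_edges_def tg_snd chl_mem)

lemma tg_trancl: "(p, q) \<in> (pg_edges (tree_graph (v, n, t)))\<^sup>+ \<Longrightarrow> strict_prefix p q \<or> prefix p v"
proof (induction rule: trancl_induct)
  case (base y) then show ?case by (auto simp: tg_edges strict_prefix_def)
next
  case (step y z)
  from step.hyps(2) have "(z = [] \<and> y = v) \<or> (\<exists>i. z = y @ [i])" by (auto simp: tg_edges)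
  then show ?case
  proof
    assume "z = [] \<and> y = v" then show ?thesis using step.IH by (auto simp: strict_prefix_def)
  next
    assume "\<exists>i. z = y @ [i]"
    then obtain i where z: "z = y @ [i]" by blast
    have "strict_prefix y z" using z by (simp add: strict_prefix_def)
    then show ?thesis using step.IH prefix_order.less_trans by blast
  qed
qed

lemma tg_root_path: "p \<in> vertices t \<Longrightarrow> ([], p) \<in> (pg_edges (tree_graph (v, n, t)))\<^sup>*"
proof (induction p rule: rev_induct)
  case Nil then show ?case by simp
next
  case (snoc i p)
  then have "p \<in> vertices t" "i < arity t p" by (simp_all add: vertices_snoc)
  then have "(p, p @ [i]) \<in> pg_edges (tree_graph (v, n, t))" by (simp add: tg_edges)
  with snoc \<open>p \<in> vertices t\<close> show ?case by (meson rtrancl.rtrancl_into_rtrancl)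
qed

lemma tg_root_cycle: "(v, n, t) \<in> marked \<Longrightarrow> ([], []) \<in> (pg_edges (tree_graph (v, n, t)))\<^sup>+"
proof -
  assume "(v, n, t) \<in> marked"
  then have v: "v \<in> vertices t" by (simp add: marked_def)
  then have "(v, []) \<in> pg_edges (tree_graph (v, n, t))" by (simp add: tg_edges)
  with tg_root_path[OF v] show ?thesis by (meson rtrancl_into_trancl1)
qed

lemma isom_edge: "isom f G H \<Longrightarrow> (x, y) \<in> pg_edges G \<Longrightarrow> (f x, f y) \<in> pg_edges H"
  by (auto simp: isom_def pg_edges_def dest: bij_betwE)

lemma isom_trancl: assumes "isom f G H" "(x, y) \<in> (pg_edges G)\<^sup>+" shows "(f x, f y) \<in> (pg_edges H)\<^sup>+"
  using assms(2)
proof (induction rule: trancl_induct)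
  case (base y) then show ?case using isom_edge[OF assms(1)] by blast
next
  case (step y z) then show ?case using isom_edge[OF assms(1)] by (meson trancl.trancl_into_trancl)
qed
lemma rigid:
  assumes m: "(v, n, t) \<in> marked" and m': "(v', n', t') \<in> marked"
    and f: "isom f (tree_graph (v, n, t)) (tree_graph (v', n', t'))" and f0: "f [] = []"
  shows "v' = v \<and> n' = n \<and> t' = t"
proof -
  have bij: "bij_betw f (vertices t) (vertices t')" using f by (simp add: isom_def)
  have inj: "inj_on f (vertices t)" using bij by (simp add: bij_betw_def)
  have com: "chl v' n' t' (f p) = map f (chl v n t p)" if "p \<in> vertices t" for p
    using f that bij_betwE[OF bij] by (simp add: isom_def tg_snd)
  have fnil: "f c = [] \<longleftrightarrow> c = []" if "c \<in> vertices t" for c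
    using inj that f0 by (metis inj_on_eq_iff vertices_Nil)
  have id: "f p = p" if "p \<in> vertices t" for p
    using that
  proof (induction p rule: rev_induct)
    case Nil then show ?case using f0 by simp
  next
    case (snoc i p)
    then have p: "p \<in> vertices t" "i < arity t p" by (simp_all add: vertices_snoc)
    then have fp: "f p = p" using snoc.IH by simp
    have "map (\<lambda>i. p @ [i]) [0..<arity t' p] = filter (\<lambda>c. c \<noteq> []) (map f (chl v n t p))"
      using arg_cong[OF com[OF p(1)], of "filter (\<lambda>c. c \<noteq> [])"] fp chl_filter[of v' n' t' p] by simp
    also have "\<dots> = map f (filter (\<lambda>c. f c \<noteq> []) (chl v n t p))" by (simp add: filter_map o_def)
    also have "filter (\<lambda>c. f c \<noteq> []) (chl v n t p) = filter (\<lambda>c. c \<noteq> []) (chl v n t p)"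
      using chl_set[OF p(1), of v n] fnil by (intro filter_cong) auto
    finally have e: "map (\<lambda>i. p @ [i]) [0..<arity t' p] = map (\<lambda>i. f (p @ [i])) [0..<arity t p]"
      by (simp add: chl_filter)
    then have "length [0..<arity t' p] = length [0..<arity t p]" by (metis length_map)
    then have "arity t' p = arity t p" by simp
    then show ?case using e p(2) by (metis (no_types, lifting) add_0 diff_zero length_upt nth_map nth_upt)
  qed
  have V: "vertices t' = vertices t"
    using bij id by (metis bij_betw_imp_surj_on image_cong image_ident)
  then have t: "t' = t" by (rule vertices_inj)
  have ch: "chl v' n' t p = chl v n t p" if "p \<in> vertices t" for p
    using com[OF that] id[OF that] id chl_set[OF that, of v n] t by (simp add: map_idI subset_iff)
  have vv: "v \<in> vertices t" "1 \<le> n" "n \<le> arity t v + 1" using m by (auto simp: marked_def)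
  have vv': "v' \<in> vertices t" "1 \<le> n'" "n' \<le> arity t v' + 1" using m' t by (auto simp: marked_def)
  have "[] \<in> set (chl v' n' t v)" using ch[OF vv(1)] by (simp add: chl_mem)
  then have v: "v' = v" by (simp add: chl_mem)
  define cs where "cs = map (\<lambda>i. v @ [i]) [0..<arity t v]"
  have "take (n' - 1) cs @ [] # drop (n' - 1) cs = take (n - 1) cs @ [] # drop (n - 1) cs"
    using ch[OF vv(1)] v by (simp add: chl_def cs_def Let_def)
  moreover have "[] \<notin> set cs" by (auto simp: cs_def)
  ultimately have "take (n' - 1) cs = take (n - 1) cs"
    by (meson append_Cons_eq_iff in_set_dropD in_set_takeD)
  then have "length (take (n' - 1) cs) = length (take (n - 1) cs)" by simp
  moreover have "n - 1 \<le> length cs" "n' - 1 \<le> length cs" using vv vv' v by (simp_all add: cs_def)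
  ultimately have "n' - 1 = n - 1" by (simp add: min_absorb2)
  then have "n' = n" using vv vv' by simp
  then show ?thesis using v t by simp
qed

function delt :: "ptree \<Rightarrow> nat list \<Rightarrow> nat \<Rightarrow> ptree" where
  "delt (Node ts) [] j = Node (take j ts @ drop (Suc j) ts)"
| "delt (Node ts) (i # p) j = (if i < length ts then Node (ts[i := delt (ts ! i) p j]) else Node ts)"
  by pat_completeness auto
termination
  by (relation "measure (\<lambda>(t, p, j). size t)") (auto dest: size_nth_less)

lemma del_graft:
  "w @ [j] \<in> vertices t \<Longrightarrow> graft (the (subtree t (w @ [j]))) w (Suc j) (delt t w j) = t
     \<and> w \<in> vertices (delt t w j) \<and> Suc (arity (delt t w j) w) = arity t w"
proof (induction w arbitrary: t)
  case Nil
  obtain ts where t: "t = Node ts" by (cases t)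
  with Nil have j: "j < length ts" by simp
  have "take j ts @ ts ! j # drop (Suc j) ts = ts" using j by (rule id_take_nth_drop[symmetric])
  then show ?case using t j by (simp add: arity_Nil min_def)
next
  case (Cons i w)
  obtain ts where t: "t = Node ts" by (cases t)
  with Cons.prems have i: "i < length ts" "w @ [j] \<in> vertices (ts ! i)" by simp_all
  note IH = Cons.IH[OF i(2)]
  have "subtree t ((i # w) @ [j]) = subtree (ts ! i) (w @ [j])" using t i by simp
  then show ?case using t i IH by (simp add: arity_Cons)
qed

lemma decomp:
  assumes m: "(v, n, t) \<in> marked" and w: "prefix (w @ [j]) v"
  defines "s \<equiv> the (subtree t (w @ [j]))" and "u \<equiv> drop (Suc (length w)) v"
  shows "(w, Suc j, delt t w j) \<in> marked" "(u, n, s) \<in> marked"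
    "v = w @ (Suc j - 1) # u" "t = graft s w (Suc j) (delt t w j)"
proof -
  have vv: "v \<in> vertices t" "1 \<le> n" "n \<le> arity t v + 1" using m by (auto simp: marked_def)
  obtain r where r: "v = (w @ [j]) @ r" using w by (auto simp: prefix_def)
  then have ur: "u = r" by (simp add: u_def)
  have v: "v = w @ j # u" using r ur by simp
  have wj: "w @ [j] \<in> vertices t" using vv(1) r vertices_prefix by blast
  note D = del_graft[OF wj]
  have sj: "subtree t (w @ [j]) = Some s" using wj by (auto simp: vertices_def s_def)
  have "subtree t v = subtree s u" using sj v subtree_append[of t "w @ [j]" u] by simp
  then have "u \<in> vertices s" "arity s u = arity t v" using vv(1) by (auto simp: vertices_def arity_def)
  then show "(u, n, s) \<in> marked" using vv by (simp add: marked_def)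
  have "j < arity t w" using wj by (simp add: vertices_snoc)
  then show "(w, Suc j, delt t w j) \<in> marked" using D by (auto simp: marked_def)
  show "v = w @ (Suc j - 1) # u" using v by simp
  show "t = graft s w (Suc j) (delt t w j)" using D by (simp add: s_def)
qed

lemma count_list_distinct: "distinct xs \<Longrightarrow> count_list xs y = (if y \<in> set xs then 1 else 0)"
  by (induction xs) auto

lemma raw_tg:
  assumes m: "(v, n, t) \<in> marked"
  shows "raw_aroma (tree_graph (v, n, t))"
proof -
  have vv: "v \<in> vertices t" using m by (simp add: marked_def)
  have indeg: "(\<Sum>x\<in>vertices t. count_list (snd (tree_graph (v, n, t)) x) y) = 1" if y: "y \<in> vertices t" for y
  proof -
    obtain z where z: "z \<in> vertices t" "\<And>x. x \<in> vertices t \<Longrightarrow> y \<in> set (chl v n t x) \<longleftrightarrow> x = z"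
    proof (cases y rule: rev_cases)
      case Nil
      then show ?thesis using that[of v] vv by (auto simp: chl_mem)
    next
      case (snoc y0 i)
      then have "y0 \<in> vertices t" "i < arity t y0" using y by (simp_all add: vertices_snoc)
      then show ?thesis using that[of y0] snoc by (auto simp: chl_mem)
    qed
    have "(\<Sum>x\<in>vertices t. count_list (snd (tree_graph (v, n, t)) x) y) =
          (\<Sum>x\<in>vertices t. if x = z then 1 else 0)"
    proof (rule sum.cong[OF refl])
      fix x assume x: "x \<in> vertices t"
      have "snd (tree_graph (v, n, t)) x = chl v n t x" by (rule tg_snd[OF x])
      then show "count_list (snd (tree_graph (v, n, t)) x) y = (if x = z then 1 else 0)"
        using z(2)[OF x] count_list_distinct[OF chl_distinct] by simp
    qed
    also have "\<dots> = 1" using z(1) finite_vertices by simp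
    finally show ?thesis .
  qed
  have conn: "(x, y) \<in> (pg_edges (tree_graph (v, n, t)) \<union> (pg_edges (tree_graph (v, n, t)))\<inverse>)\<^sup>*"
    if "x \<in> vertices t" "y \<in> vertices t" for x y
  proof -
    let ?E = "pg_edges (tree_graph (v, n, t))"
    have "([], y) \<in> ?E\<^sup>*" "([], x) \<in> ?E\<^sup>*" using tg_root_path that by auto
    have sub1: "?E\<^sup>* \<subseteq> (?E \<union> ?E\<inverse>)\<^sup>*" by (rule rtrancl_mono) blast
    have sub2: "(?E\<inverse>)\<^sup>* \<subseteq> (?E \<union> ?E\<inverse>)\<^sup>*" by (rule rtrancl_mono) blast
    have "(x, []) \<in> (?E\<inverse>)\<^sup>*" using \<open>([], x) \<in> ?E\<^sup>*\<close> by (rule rtrancl_converseI)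
    then have "(x, []) \<in> (?E \<union> ?E\<inverse>)\<^sup>*" using sub2 by blast
    moreover have "([], y) \<in> (?E \<union> ?E\<inverse>)\<^sup>*" using \<open>([], y) \<in> ?E\<^sup>*\<close> sub1 by blast
    ultimately show ?thesis by (rule rtrancl_trans)
  qed
  have cl: "\<forall>x\<in>vertices t. set (snd (tree_graph (v, n, t)) x) \<subseteq> vertices t"
    using tg_closed[of v n t] by (simp add: gclosed_def)
  have out: "\<forall>x. x \<notin> vertices t \<longrightarrow> snd (tree_graph (v, n, t)) x = []"
    using tg_snd_out by blast
  obtain V ch where G: "tree_graph (v, n, t) = (V, ch)" by (cases "tree_graph (v, n, t)")
  then have V: "V = vertices t" "ch = snd (tree_graph (v, n, t))" by (metis fst_conv tg_fst, simp)
  have "raw_aroma (V, ch)"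
  proof -
    have c1: "finite V" "V \<noteq> {}" using V(1) finite_vertices vertices_Nil[of t] by blast+
    have c2: "\<forall>x\<in>V. set (ch x) \<subseteq> V" using cl V by simp
    have c3: "\<forall>x. x \<notin> V \<longrightarrow> ch x = []" using out V by simp
    have c4: "\<forall>y\<in>V. (\<Sum>x\<in>V. count_list (ch x) y) = 1" using indeg V by simp
    have c5: "\<forall>x\<in>V. \<forall>y\<in>V. (x, y) \<in> (pg_edges (V, ch) \<union> (pg_edges (V, ch))\<inverse>)\<^sup>*"
      using conn[unfolded G] V(1) by simp
    show ?thesis unfolding raw_aroma_def prod.case using c1 c2 c3 c4 c5 by blast
  qed
  then show ?thesis using G by simp
qed
lemma rep_marked: "rep_mpt x \<in> marked"
  using rep_mpt by blast

lemma rep_comp0: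
  assumes "rep_mpt a = (v1, n1, t1)" "rep_mpt b = (v2, n2, t2)"
  shows "rep_mpt (mpt_comp0 a b) = (v1 @ (n1 - 1) # v2, n2, graft t2 v1 n1 t1)"
proof -
  have A: "(v1, n1, t1) \<in> marked" and B: "(v2, n2, t2) \<in> marked" using assms rep_marked by metis+
  have "(v1 @ (n1 - 1) # v2, n2, graft t2 v1 n1 t1) \<in> marked"
    using A B by (intro comp_marked) (auto simp: marked_def)
  then show ?thesis using assms by (simp add: mpt_comp0_def abs_mpt_inverse)
qed

lemma class_eq:
  assumes "isom f G H" "gclosed G"
  shows "aroma_class G = aroma_class H"
proof -
  obtain g where g: "isom g H G" using isom_inv[OF assms] by blast
  show ?thesis unfolding aroma_class_def pg_iso_isom
    using isom_comp[OF assms(1)] isom_comp[OF g] by blast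
qed

lemma tau0_eq_iff: "tau0 x = tau0 y \<longleftrightarrow> pg_iso (tree_graph (rep_mpt x)) (tree_graph (rep_mpt y))"
proof
  assume "pg_iso (tree_graph (rep_mpt x)) (tree_graph (rep_mpt y))"
  then obtain f where "isom f (tree_graph (rep_mpt x)) (tree_graph (rep_mpt y))" by (auto simp: pg_iso_isom)
  moreover have "gclosed (tree_graph (rep_mpt x))" using tg_closed by (metis prod_cases3)
  ultimately show "tau0 x = tau0 y" unfolding tau0_def using class_eq by metis
next
  assume e: "tau0 x = tau0 y"
  have raw: "raw_aroma (tree_graph (rep_mpt z))" for z using raw_tg rep_marked by (metis prod_cases3)
  have "aroma_class (tree_graph (rep_mpt x)) = aroma_class (tree_graph (rep_mpt y))"
    using e raw unfolding tau0_def by (subst (asm) abs_aroma_inject) blast+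
  moreover have "tree_graph (rep_mpt y) \<in> aroma_class (tree_graph (rep_mpt y))"
    using raw isom_id unfolding aroma_class_def pg_iso_isom by blast
  ultimately show "pg_iso (tree_graph (rep_mpt x)) (tree_graph (rep_mpt y))"
    unfolding aroma_class_def by blast
qed

lemma tau0_comm: "tau0 (mpt_comp0 a b) = tau0 (mpt_comp0 b a)"
proof -
  obtain v1 n1 t1 where a: "rep_mpt a = (v1, n1, t1)" by (metis prod_cases3)
  obtain v2 n2 t2 where b: "rep_mpt b = (v2, n2, t2)" by (metis prod_cases3)
  obtain g where "isom g (tree_graph (rep_mpt (mpt_comp0 b a))) (tree_graph (rep_mpt (mpt_comp0 a b)))"
    using rotation_isom[of v1 n1 t1 v2 n2 t2] rep_marked a b rep_comp0[OF a b] rep_comp0[OF b a] by metis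
  then show ?thesis using tau0_eq_iff pg_iso_isom by metis
qed

lemma tau0_fiber: "tau0 x = tau0 y \<Longrightarrow> x = y \<or> (\<exists>a b. x = mpt_comp0 b a \<and> y = mpt_comp0 a b)"
proof -
  assume "tau0 x = tau0 y"
  then obtain f where f: "isom f (tree_graph (rep_mpt x)) (tree_graph (rep_mpt y))"
    by (auto simp: tau0_eq_iff pg_iso_isom)
  obtain v n t where x: "rep_mpt x = (v, n, t)" by (metis prod_cases3)
  obtain v' n' t' where y: "rep_mpt y = (v', n', t')" by (metis prod_cases3)
  have mx: "(v, n, t) \<in> marked" and my: "(v', n', t') \<in> marked" using x y rep_marked by metis+
  have "([], []) \<in> (pg_edges (tree_graph (v, n, t)))\<^sup>+" by (rule tg_root_cycle[OF mx])
  then have "(f [], f []) \<in> (pg_edges (tree_graph (v', n', t')))\<^sup>+" using isom_trancl f x y by metis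
  then have pw: "prefix (f []) v'" using tg_trancl by blast
  show ?thesis
  proof (cases "f [] = []")
    case True
    then have "v' = v \<and> n' = n \<and> t' = t" using rigid[OF mx my, of f] f x y by simp
    then have "rep_mpt x = rep_mpt y" using x y by simp
    then show ?thesis by (simp add: rep_mpt_inject)
  next
    case False
    then obtain w j where wj: "f [] = w @ [j]" by (metis rev_exhaust)
    define s where "s = the (subtree t' (w @ [j]))"
    define u where "u = drop (Suc (length w)) v'"
    note D = decomp[OF my pw[unfolded wj], folded s_def u_def]
    define a where "a = abs_mpt (w, Suc j, delt t' w j)"
    define b where "b = abs_mpt (u, n', s)"
    have ra: "rep_mpt a = (w, Suc j, delt t' w j)" using D(1) by (simp add: a_def abs_mpt_inverse)
    have rb: "rep_mpt b = (u, n', s)" using D(2) by (simp add: b_def abs_mpt_inverse)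
    have "rep_mpt (mpt_comp0 a b) = rep_mpt y" using rep_comp0[OF ra rb] D(3,4) y by simp
    then have yab: "y = mpt_comp0 a b" by (simp add: rep_mpt_inject)
    obtain g where g: "isom g (tree_graph (rep_mpt (mpt_comp0 b a))) (tree_graph (rep_mpt (mpt_comp0 a b)))"
      and g0: "g [] = w @ [Suc j - 1]"
      using rotation_isom[of w "Suc j" "delt t' w j" u n' s] D(1,2) rep_comp0[OF ra rb] rep_comp0[OF rb ra] by metis
    obtain v2 n2 t2 where ba: "rep_mpt (mpt_comp0 b a) = (v2, n2, t2)" by (metis prod_cases3)
    have cl: "gclosed (tree_graph (rep_mpt (mpt_comp0 b a)))" using tg_closed ba by metis
    define h where "h = the_inv_into (fst (tree_graph (rep_mpt (mpt_comp0 b a)))) g"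
    have h: "isom h (tree_graph (rep_mpt y)) (tree_graph (rep_mpt (mpt_comp0 b a)))"
      using isom_inv[OF g cl] yab by (simp add: h_def)
    have "g [] = f []" using g0 wj by simp
    moreover have "inj_on g (fst (tree_graph (rep_mpt (mpt_comp0 b a))))" using g by (simp add: isom_def bij_betw_def)
    moreover have "[] \<in> fst (tree_graph (rep_mpt (mpt_comp0 b a)))" using ba by simp
    ultimately have h0: "h (f []) = []" unfolding h_def by (metis the_inv_into_f_f)
    have hf: "isom (h \<circ> f) (tree_graph (v, n, t)) (tree_graph (v2, n2, t2))"
      using isom_comp[OF f h] x ba by simp
    have m2: "(v2, n2, t2) \<in> marked" using ba rep_marked by metis
    have "rep_mpt x = rep_mpt (mpt_comp0 b a)" using rigid[OF mx m2 hf] h0 x ba by simp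
    then have "x = mpt_comp0 b a" by (simp add: rep_mpt_inject)
    then show ?thesis using yab by blast
  qed
qed
definition cs :: "(nat list \<Rightarrow> nat list list) \<Rightarrow> nat list \<Rightarrow> nat list \<Rightarrow> nat list list" where
  "cs ch r y = filter (\<lambda>c. c \<noteq> r) (ch y)"

fun wk :: "(nat list \<Rightarrow> nat list list) \<Rightarrow> nat list \<Rightarrow> nat list \<Rightarrow> nat list \<Rightarrow> nat list option" where
  "wk ch r y [] = Some y"
| "wk ch r y (i # p) = (if i < length (cs ch r y) then wk ch r (cs ch r y ! i) p else None)"

fun unf :: "(nat list \<Rightarrow> nat list list) \<Rightarrow> nat list \<Rightarrow> nat \<Rightarrow> nat list \<Rightarrow> ptree" where
  "unf ch r 0 y = Node []"
| "unf ch r (Suc k) y = Node (map (unf ch r k) (cs ch r y))"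

lemma wk_append: "wk ch r y (p @ q) = (case wk ch r y p of None \<Rightarrow> None | Some z \<Rightarrow> wk ch r z q)"
  by (induction p arbitrary: y) auto

lemma wk_snoc: "wk ch r y (p @ [i]) = (case wk ch r y p of None \<Rightarrow> None
    | Some z \<Rightarrow> if i < length (cs ch r z) then Some (cs ch r z ! i) else None)"
  by (simp add: wk_append split: option.splits)

lemma subtree_unf: "subtree (unf ch r k y) p =
   (if length p \<le> k then map_option (unf ch r (k - length p)) (wk ch r y p) else None)"
proof (induction p arbitrary: k y)
  case Nil then show ?case by simp
next
  case (Cons i p)
  show ?case
  proof (cases k)
    case 0 then show ?thesis by simp
  next
    case (Suc k') then show ?thesis using Cons.IH by simp
  qed
qed

lemma sum_eq_1_nat:
  assumes "finite A" "(\<Sum>x\<in>A. f x) = (1::nat)" "x \<in> A" "f x \<noteq> 0"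
  shows "f x = 1 \<and> (\<forall>z\<in>A. z \<noteq> x \<longrightarrow> f z = 0)"
proof -
  have "f x + (\<Sum>z\<in>A - {x}. f z) = 1" using assms(2) sum.remove[OF assms(1,3), of f] by simp
  then have "f x = 1" "(\<Sum>z\<in>A - {x}. f z) = 0" using assms(4) by linarith+
  moreover have "finite (A - {x})" using assms(1) by simp
  ultimately show ?thesis using sum_eq_0_iff by blast
qed

lemma distinct_count: "(\<forall>y\<in>set xs. count_list xs y \<le> 1) \<Longrightarrow> distinct xs"
proof (induction xs)
  case Nil then show ?case by simp
next
  case (Cons x xs)
  have le: "count_list xs y \<le> count_list (x # xs) y" for y by simp
  have "count_list (x # xs) x \<le> 1" using Cons.prems by simp
  then have "count_list xs x = 0" by simp
  then have "x \<notin> set xs" by (simp add: count_list_0_iff)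
  moreover have "\<forall>y\<in>set xs. count_list xs y \<le> 1" 
  proof
    fix y assume "y \<in> set xs"
    then have "count_list (x # xs) y \<le> 1" using Cons.prems by simp
    then show "count_list xs y \<le> 1" using le[of y] by linarith
  qed
  ultimately show ?case using Cons.IH by simp
qed

lemma filter_split:
  assumes "distinct xs" "j < length xs" "xs ! j = r"
  shows "xs = take j (filter (\<lambda>c. c \<noteq> r) xs) @ r # drop j (filter (\<lambda>c. c \<noteq> r) xs)"
    and "length xs = Suc (length (filter (\<lambda>c. c \<noteq> r) xs))"
proof -
  have x: "xs = take j xs @ r # drop (Suc j) xs" using id_take_nth_drop[OF assms(2)] unfolding assms(3) .
  have "distinct (take j xs @ r # drop (Suc j) xs)" using arg_cong[OF x, of distinct] assms(1) by (rule iffD1)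
  then have nr: "r \<notin> set (take j xs)" "r \<notin> set (drop (Suc j) xs)" by auto
  have e1: "filter (\<lambda>c. c \<noteq> r) (take j xs) = take j xs" by (rule filter_True) (use nr(1) in blast)
  have e2: "filter (\<lambda>c. c \<noteq> r) (drop (Suc j) xs) = drop (Suc j) xs" by (rule filter_True) (use nr(2) in blast)
  have e0: "filter (\<lambda>c. c \<noteq> r) (take j xs @ r # drop (Suc j) xs) = take j xs @ drop (Suc j) xs"
    by (simp add: e1 e2)
  have f: "filter (\<lambda>c. c \<noteq> r) xs = take j xs @ drop (Suc j) xs"
    using arg_cong[OF x, of "filter (\<lambda>c. c \<noteq> r)"] e0 by (rule trans)
  have lj: "length (take j xs) = j" using assms(2) by simp
  show "xs = take j (filter (\<lambda>c. c \<noteq> r) xs) @ r # drop j (filter (\<lambda>c. c \<noteq> r) xs)"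
  proof -
    have t1: "take j (take j xs @ drop (Suc j) xs) = take j xs" using lj by simp
    have t2: "drop j (take j xs @ drop (Suc j) xs) = drop (Suc j) xs" using lj by simp
    show ?thesis unfolding f t1 t2 by (rule x)
  qed
  show "length xs = Suc (length (filter (\<lambda>c. c \<noteq> r) xs))"
    unfolding f using assms(2) by simp
qed


lemma raw_to_tree:
  assumes raw: "raw_aroma (V, ch)"
  shows "\<exists>m \<in> marked. \<exists>h. isom h (tree_graph m) (V, ch)"
proof -
  have fin: "finite V" and ne: "V \<noteq> {}" and clo: "\<And>x. x \<in> V \<Longrightarrow> set (ch x) \<subseteq> V"
    and indeg: "\<And>y. y \<in> V \<Longrightarrow> (\<Sum>x\<in>V. count_list (ch x) y) = 1"
    and conn: "\<And>x y. x \<in> V \<Longrightarrow> y \<in> V \<Longrightarrow> (x, y) \<in> (pg_edges (V, ch) \<union> (pg_edges (V, ch))\<inverse>)\<^sup>*"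
    using raw unfolding raw_aroma_def by auto
  have par_ex: "\<exists>x\<in>V. y \<in> set (ch x)" if "y \<in> V" for y
  proof (rule ccontr)
    assume "\<not> ?thesis"
    then have "(\<Sum>x\<in>V. count_list (ch x) y) = 0" by (simp add: count_list_0_iff)
    then show False using indeg[OF that] by simp
  qed
  have par_uniq: "x = x'" if "y \<in> V" "x \<in> V" "x' \<in> V" "y \<in> set (ch x)" "y \<in> set (ch x')" for x x' y
    using sum_eq_1_nat[OF fin indeg[OF that(1)], of x] that by (auto simp: count_list_0_iff)
  have cnt1: "count_list (ch x) y \<le> 1" if "y \<in> V" "x \<in> V" for x y
  proof (cases "y \<in> set (ch x)")
    case True then show ?thesis using sum_eq_1_nat[OF fin indeg[OF that(1)], of x] that by (auto simp: count_list_0_iff)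
  next
    case False then show ?thesis by (simp add: count_list_0_iff)
  qed
  have dist: "distinct (ch x)" if "x \<in> V" for x
    using cnt1 clo[OF that] that by (intro distinct_count) blast
  define P where "P y = (THE x. x \<in> V \<and> y \<in> set (ch x))" for y
  have P: "P y \<in> V \<and> y \<in> set (ch (P y))" if yV: "y \<in> V" for y
  proof -
    obtain x where "x \<in> V" "y \<in> set (ch x)" using par_ex[OF yV] by blast
    then have "P y = x" unfolding P_def using par_uniq[OF yV] by blast
    then show ?thesis using \<open>x \<in> V\<close> \<open>y \<in> set (ch x)\<close> by simp
  qed
  have Pu: "x = P y" if "y \<in> V" "x \<in> V" "y \<in> set (ch x)" for x y
    using par_uniq[OF that(1,2) _ that(3)] P[OF that(1)] by blast
  have PV: "(P ^^ i) y \<in> V" if "y \<in> V" for i y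
    by (induction i) (simp_all add: that P)
  obtain y0 where y0: "y0 \<in> V" using ne by blast
  have "\<not> inj_on (\<lambda>i. (P ^^ i) y0) {0..card V}"
  proof
    assume "inj_on (\<lambda>i. (P ^^ i) y0) {0..card V}"
    moreover have "(\<lambda>i. (P ^^ i) y0) ` {0..card V} \<subseteq> V" using PV y0 by auto
    ultimately have "card {0..card V} \<le> card V" using fin by (rule card_inj_on_le)
    then show False by simp
  qed
  then obtain i j where ij: "i < j" "(P ^^ i) y0 = (P ^^ j) y0"
    unfolding inj_on_def by (metis linorder_neqE_nat)
  define r where "r = (P ^^ i) y0"
  define d where "d = j - i"
  have rV: "r \<in> V" using PV y0 by (simp add: r_def)
  have per: "(P ^^ d) r = r"
  proof -
    have "(P ^^ d) ((P ^^ i) y0) = (P ^^ (d + i)) y0" by (simp add: funpow_add)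
    moreover have "d + i = j" using ij by (simp add: d_def)
    ultimately show ?thesis using ij by (simp add: r_def)
  qed
  have d0: "d \<noteq> 0" using ij by (simp add: d_def)
  let ?cs = "cs ch r"
  have csV: "set (?cs y) \<subseteq> V" if "y \<in> V" for y using clo[OF that] by (auto simp: cs_def)
  have csd: "distinct (?cs y)" if "y \<in> V" for y using dist[OF that] by (simp add: cs_def)
  have csr: "r \<notin> set (?cs y)" for y by (simp add: cs_def)
  define D where "D = {p. wk ch r r p \<noteq> None}"
  define h where "h p = the (wk ch r r p)" for p
  have wkV: "\<And>z. wk ch r y p = Some z \<Longrightarrow> z \<in> V" if "y \<in> V" for y p
    using that
  proof (induction p arbitrary: y)
    case Nil then show ?case by simp
  next
    case (Cons i p) then show ?case using csV by (auto split: if_splits intro: nth_mem)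
  qed
  have hV: "h p \<in> V" if "p \<in> D" for p using that wkV[OF rV] by (auto simp: D_def h_def)
  have D_snoc: "p @ [i] \<in> D \<longleftrightarrow> p \<in> D \<and> i < length (?cs (h p))" for p i
    by (auto simp: D_def h_def wk_snoc split: option.splits)
  have h_snoc: "h (p @ [i]) = ?cs (h p) ! i" if "p @ [i] \<in> D" for p i
    using that by (auto simp: D_def h_def wk_snoc split: option.splits if_splits)
  have D0: "[] \<in> D" and h0: "h [] = r" by (simp_all add: D_def h_def)
  have Dpre: "p \<in> D" if "p @ q \<in> D" for p q
    using that by (auto simp: D_def wk_append split: option.splits)
  have hne: "h (p @ [i]) \<noteq> r" if "p @ [i] \<in> D" for p i
    using h_snoc[OF that] D_snoc[of p i] that csr by (metis nth_mem)
  have hch: "h (p @ [i]) \<in> set (ch (h p))" if "p @ [i] \<in> D" for p i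
    using h_snoc[OF that] D_snoc[of p i] that by (auto simp: cs_def dest: nth_mem)
  have inj: "p = q" if "p \<in> D" "q \<in> D" "h p = h q" for p q
    using that
  proof (induction p arbitrary: q rule: rev_induct)
    case Nil then show ?case using hne h0 by (cases q rule: rev_cases) auto
  next
    case (snoc i p)
    show ?case
    proof (cases q rule: rev_cases)
      case Nil then show ?thesis using snoc.prems hne h0 by auto
    next
      case (snoc q' j)
      have pD: "p \<in> D" "q' \<in> D" using snoc.prems \<open>q = q' @ [j]\<close> Dpre by blast+
      have "h p = P (h (p @ [i]))" using Pu hch[OF snoc.prems(1)] hV pD(1) snoc.prems(1) by blast
      moreover have "h q' = P (h (q' @ [j]))" using Pu hch hV pD(2) snoc.prems(2) \<open>q = q' @ [j]\<close> by blast
      ultimately have "h p = h q'" using snoc.prems \<open>q = q' @ [j]\<close> by simp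
      then have pq: "p = q'" using snoc.IH pD by blast
      have "?cs (h p) ! i = ?cs (h p) ! j" using h_snoc snoc.prems \<open>q = q' @ [j]\<close> pq by metis
      moreover have "i < length (?cs (h p))" "j < length (?cs (h p))"
        using D_snoc snoc.prems \<open>q = q' @ [j]\<close> pq by blast+
      ultimately have "i = j" using csd[OF hV[OF pD(1)]] nth_eq_iff_index_eq by blast
      then show ?thesis using pq \<open>q = q' @ [j]\<close> by simp
    qed
  qed
  have injD: "inj_on h D" using inj by (meson inj_onI)
  have bound: "length p < card V" if "p \<in> D" for p
  proof -
    have "inj_on (\<lambda>k. h (take k p)) {0..length p}"
    proof (rule inj_onI)
      fix k k' assume k: "k \<in> {0..length p}" "k' \<in> {0..length p}" "h (take k p) = h (take k' p)"
      have "take k p \<in> D" "take k' p \<in> D" using that Dpre by (metis append_take_drop_id)+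
      then have "take k p = take k' p" using inj k(3) by blast
      then show "k = k'" using k by (metis atLeastAtMost_iff length_take min.absorb2)
    qed
    moreover have "(\<lambda>k. h (take k p)) ` {0..length p} \<subseteq> V"
      using hV that Dpre by (auto, metis append_take_drop_id)
    ultimately have "card {0..length p} \<le> card V" using fin by (rule card_inj_on_le)
    then show ?thesis by simp
  qed
  define N where "N = card V"
  define t where "t = unf ch r N r"
  have vt: "vertices t = D"
    using bound by (auto simp: vertices_def t_def subtree_unf D_def N_def split: if_splits)
       (metis (mono_tags, lifting) D_def less_or_eq_imp_le mem_Collect_eq)
  have ar: "arity t p = length (?cs (h p))" if "p \<in> D" for p
  proof -
    have "length p \<le> N" using bound[OF that] by (simp add: N_def)
    then have "subtree t p = Some (unf ch r (N - length p) (h p))"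
      using that by (auto simp: t_def subtree_unf D_def h_def)
    moreover have "N - length p = Suc (N - Suc (length p))" using bound[OF that] by (simp add: N_def)
    ultimately show ?thesis by (simp add: arity_def)
  qed
  define S where "S = h ` D"
  have child: "c \<in> S" if zS: "z \<in> S" and cz: "c \<in> set (ch z)" for z c
  proof (cases "c = r")
    case True then show ?thesis using D0 h0 by (auto simp: S_def)
  next
    case False
    obtain p where p: "p \<in> D" "z = h p" using zS by (auto simp: S_def)
    then have "c \<in> set (?cs (h p))" using cz False by (simp add: cs_def)
    then obtain i where i: "i < length (?cs (h p))" "?cs (h p) ! i = c" by (meson in_set_conv_nth)
    then have pi: "p @ [i] \<in> D" using D_snoc p by blast
    then have "h (p @ [i]) = c" using h_snoc i by simp
    then show ?thesis using pi unfolding S_def by (metis image_eqI)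
  qed
  have chain: "z \<in> S" if "z \<in> V" "(P ^^ k) z = r" for k z
    using that
  proof (induction k arbitrary: z)
    case 0 then show ?case using D0 h0 by (auto simp: S_def)
  next
    case (Suc k)
    have "(P ^^ k) (P z) = r" using Suc.prems by (simp add: funpow_Suc_right del: funpow.simps)
    then have "P z \<in> S" using Suc.IH P Suc.prems(1) by blast
    then show ?case using child P Suc.prems(1) by blast
  qed
  have PrS: "P r \<in> S"
  proof -
    have "(P ^^ (d - 1)) (P r) = (P ^^ d) r" using d0
      by (metis Suc_pred' bot_nat_0.not_eq_extremum funpow_Suc_right o_apply)
    then show ?thesis using chain P rV per by metis
  qed
  have parent: "x \<in> S" if yS: "y \<in> S" and xV: "x \<in> V" and yx: "y \<in> set (ch x)" for x y
  proof -
    obtain p where p: "p \<in> D" "y = h p" using yS by (auto simp: S_def)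
    show ?thesis
    proof (cases p rule: rev_cases)
      case Nil
      then have "x = P r" using Pu rV xV yx p h0 by blast
      then show ?thesis using PrS by simp
    next
      case (snoc p' i)
      then have "h p' \<in> V" "p' \<in> D" using p Dpre hV by blast+
      moreover have "y \<in> set (ch (h p'))" using hch p snoc by blast
      ultimately have "x = h p'" using par_uniq xV yx hV p by blast
      then show ?thesis using \<open>p' \<in> D\<close> by (auto simp: S_def)
    qed
  qed
  have VS: "V \<subseteq> S"
  proof
    fix y assume y: "y \<in> V"
    have "(r, y) \<in> (pg_edges (V, ch) \<union> (pg_edges (V, ch))\<inverse>)\<^sup>*" using conn rV y by blast
    then show "y \<in> S"
    proof (induction rule: rtrancl_induct)
      case base then show ?case using D0 h0 by (auto simp: S_def)
    next
      case (step a b)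
      from step.hyps(2) have "(a \<in> V \<and> b \<in> set (ch a)) \<or> (b \<in> V \<and> a \<in> set (ch b))"
        by (auto simp: pg_edges_def)
      then show ?case using step.IH child parent by blast
    qed
  qed
  have SV: "S \<subseteq> V" unfolding S_def using hV by blast
  have hD: "h ` D = V" using VS SV unfolding S_def by (rule subset_antisym[rotated])
  have bij: "bij_betw h D V" unfolding bij_betw_def using injD hD by (rule conjI)
  have PrV: "P r \<in> V" by (rule conjunct1[OF P[OF rV]])
  have "P r \<in> h ` D" using VS PrV unfolding S_def by blast
  then obtain v where v: "v \<in> D" "h v = P r" by (metis imageE)
  have rch: "r \<in> set (ch (P r))" by (rule conjunct2[OF P[OF rV]])
  then obtain j where j: "j < length (ch (P r))" "ch (P r) ! j = r" by (meson in_set_conv_nth)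
  note FS = filter_split[OF dist[OF PrV] j]
  define n where "n = Suc j"
  have m: "(v, n, t) \<in> marked"
  proof -
    have "arity t v = length (?cs (P r))" using ar[OF v(1)] v(2) by simp
    then have "Suc (arity t v) = length (ch (P r))" using FS(2) by (simp add: cs_def)
    then have "n \<le> arity t v + 1" using j(1) by (simp add: n_def)
    then show ?thesis using v(1) vt by (simp add: marked_def n_def)
  qed
  have com: "ch (h p) = map h (chl v n t p)" if p: "p \<in> D" for p
  proof -
    have mh: "map h (map (\<lambda>i. p @ [i]) [0..<arity t p]) = ?cs (h p)"
    proof -
      have "map h (map (\<lambda>i. p @ [i]) [0..<arity t p]) = map (\<lambda>i. ?cs (h p) ! i) [0..<length (?cs (h p))]"
        using ar[OF p] h_snoc D_snoc p by (auto intro!: map_cong)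
      then show ?thesis by (simp add: map_nth)
    qed
    show ?thesis
    proof (cases "p = v")
      case True
      define cs' where "cs' = map (\<lambda>i. p @ [i]) [0..<arity t p]"
      have "chl v n t p = take j cs' @ [] # drop j cs'" using True by (simp add: chl_def Let_def n_def cs'_def)
      then have "map h (chl v n t p) = take j (map h cs') @ h [] # drop j (map h cs')"
        by (simp add: take_map drop_map)
      also have "\<dots> = take j (?cs (P r)) @ r # drop j (?cs (P r))"
        using mh True v h0 by (simp add: cs'_def)
      also have "\<dots> = ch (P r)" unfolding cs_def by (rule FS(1)[symmetric])
      also have "\<dots> = ch (h p)" using True v by simp
      finally show ?thesis by simp
    next
      case False
      then have "h p \<noteq> P r" using inj[OF p v(1)] v(2) by auto
      then have "r \<notin> set (ch (h p))" using Pu[OF rV hV[OF p]] by blast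
      then have c: "?cs (h p) = ch (h p)" unfolding cs_def by (intro filter_True) blast
      have "chl v n t p = map (\<lambda>i. p @ [i]) [0..<arity t p]" using False by (simp add: chl_def Let_def)
      then show ?thesis using mh c by simp
    qed
  qed
  have "isom h (tree_graph (v, n, t)) (V, ch)"
    unfolding isom_def
  proof (intro conjI ballI)
    show "bij_betw h (fst (tree_graph (v, n, t))) (fst (V, ch))" using bij vt by simp
    fix x assume "x \<in> fst (tree_graph (v, n, t))"
    then have x: "x \<in> D" using vt by simp
    then show "snd (V, ch) (h x) = map h (snd (tree_graph (v, n, t)) x)"
      using com[OF x] tg_snd[of x t v n] vt by simp
  qed
  then show ?thesis using m by blast
qed

lemma tau0_surj_aux: "\<exists>x. tau0 x = A"
proof -
  obtain G where G: "raw_aroma G" "rep_aroma A = aroma_class G" using rep_aroma by blast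
  obtain V ch where VG: "G = (V, ch)" by (cases G)
  obtain m h where m: "m \<in> marked" and h: "isom h (tree_graph m) G"
    using raw_to_tree[of V ch] G(1) VG by blast
  obtain v n t where mt: "m = (v, n, t)" by (cases m)
  have "aroma_class (tree_graph m) = aroma_class G"
    using class_eq[OF h] tg_closed mt by blast
  then have "tau0 (abs_mpt m) = A"
    using m by (simp add: tau0_def abs_mpt_inverse G(2)[symmetric] rep_aroma_inverse)
  then show ?thesis by blast
qed

lemma tau0_surj: "surj tau0"
  by (metis surj_def tau0_surj_aux)


definition push :: "('a \<Rightarrow> 'b) \<Rightarrow> ('a \<Rightarrow>\<^sub>0 'k::field) \<Rightarrow> ('b \<Rightarrow>\<^sub>0 'k)" where
  "push g f = (\<Sum>x\<in>Poly_Mapping.keys f. Poly_Mapping.single (g x) (Poly_Mapping.lookup f x))"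

lemma tau_push: "tau = push tau0"
  by (rule ext) (simp add: tau_def push_def)

lemma push_eq: "finite S \<Longrightarrow> Poly_Mapping.keys f \<subseteq> S \<Longrightarrow>
   push g f = (\<Sum>x\<in>S. Poly_Mapping.single (g x) (Poly_Mapping.lookup f x))"
  unfolding push_def
  by (rule sum.mono_neutral_left) (auto simp: in_keys_iff)

lemma push_add: "push g (f + h) = push g f + push g h"
proof -
  let ?S = "Poly_Mapping.keys f \<union> Poly_Mapping.keys h"
  have "Poly_Mapping.keys (f + h) \<subseteq> ?S" by (rule keys_add)
  then show ?thesis
    by (simp add: push_eq[of ?S] lookup_add single_add sum.distrib)
qed

lemma push_zero [simp]: "push g 0 = 0" by (simp add: push_def)

lemma push_single [simp]: "push g (Poly_Mapping.single x c) = Poly_Mapping.single (g x) c"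
  by (cases "c = 0") (simp_all add: push_def)

lemma push_sum: "push g (\<Sum>i\<in>I. F i) = (\<Sum>i\<in>I. push g (F i))"
  by (induction I rule: infinite_finite_induct) (simp_all add: push_add)

lemma push_minus: "push g (f - h) = push g f - push g h"
proof -
  have "push g f = push g (f - h) + push g h" using push_add[of g "f - h" h] by simp
  then show ?thesis by (simp add: eq_diff_eq)
qed

lemma push_push: "push h (push g f) = push (h \<circ> g) f"
  by (simp add: push_def[of g] push_sum) (simp add: push_def)

lemma lookup_fscale: "Poly_Mapping.lookup (fscale c f) k = c * Poly_Mapping.lookup f k"
  unfolding fscale_def by transfer (simp add: when_def)

lemma fscale_single: "fscale c (Poly_Mapping.single x d) = Poly_Mapping.single x (c * d)"
  by (rule poly_mapping_eqI) (simp add: lookup_fscale lookup_single when_def)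

lemma module_fscale: "module (fscale :: 'k::field \<Rightarrow> ('a \<Rightarrow>\<^sub>0 'k) \<Rightarrow> _)"
  by unfold_locales (auto intro!: poly_mapping_eqI simp: lookup_fscale lookup_add algebra_simps)

lemma push_fscale: "push g (fscale c f) = fscale c (push g f)"
proof -
  have k: "Poly_Mapping.keys (fscale c f) \<subseteq> Poly_Mapping.keys f" by (auto simp: in_keys_iff lookup_fscale)
  have "push g (fscale c f) = (\<Sum>x\<in>Poly_Mapping.keys f. Poly_Mapping.single (g x) (c * Poly_Mapping.lookup f x))"
    by (simp add: push_eq[OF _ k] lookup_fscale)
  also have "\<dots> = fscale c (push g f)"
    by (simp add: push_def fscale_single module.scale_sum_right[OF module_fscale])
  finally show ?thesis .
qed

lemma sum_singles: "f = (\<Sum>x\<in>Poly_Mapping.keys f. Poly_Mapping.single x (Poly_Mapping.lookup f x))"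
  by (rule poly_mapping_eqI) (simp add: lookup_sum lookup_single when_def in_keys_iff)

lemma push_id: "push (\<lambda>x. x) f = f"
  unfolding push_def by (rule sum_singles[symmetric])

lemma comp_singles: "mpt_comp (Poly_Mapping.single a 1) (Poly_Mapping.single b 1) =
   (Poly_Mapping.single (mpt_comp0 a b) (1::'k::field))"
  by (simp add: mpt_comp_def)

lemma tau_comp: "tau (mpt_comp a b) = tau (mpt_comp b a)"
proof -
  have "tau (mpt_comp a b) = (\<Sum>x\<in>Poly_Mapping.keys a. \<Sum>y\<in>Poly_Mapping.keys b. Poly_Mapping.single (tau0 (mpt_comp0 x y)) (Poly_Mapping.lookup a x * Poly_Mapping.lookup b y))"
    by (simp add: mpt_comp_def tau_push push_sum)
  also have "\<dots> = (\<Sum>y\<in>Poly_Mapping.keys b. \<Sum>x\<in>Poly_Mapping.keys a. Poly_Mapping.single (tau0 (mpt_comp0 y x)) (Poly_Mapping.lookup b y * Poly_Mapping.lookup a x))"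
    by (subst sum.swap) (simp add: tau0_comm mult.commute)
  also have "\<dots> = tau (mpt_comp b a)"
    by (simp add: mpt_comp_def tau_push push_sum)
  finally show ?thesis .
qed

lemma span_sub_kernel: "mpt_commutators \<subseteq> {f :: mpt \<Rightarrow>\<^sub>0 'k::field. tau f = 0}"
  unfolding mpt_commutators_def
proof (rule module.span_minimal[OF module_fscale])
  show "{mpt_comp a b - mpt_comp b a |a b. True} \<subseteq> {f :: mpt \<Rightarrow>\<^sub>0 'k. tau f = 0}"
    by (auto simp: tau_push push_minus tau_comp[unfolded tau_push])
  show "module.subspace fscale {f :: mpt \<Rightarrow>\<^sub>0 'k. tau f = 0}"
    unfolding module.subspace_def[OF module_fscale]
    by (auto simp: tau_push push_add push_fscale) (simp add: fscale_def map_eq_zero_iff)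
qed

lemma kernel_sub_span:
  assumes "tau (f :: mpt \<Rightarrow>\<^sub>0 'k::field) = 0"
  shows "f \<in> mpt_commutators"
proof -
  interpret M: module "fscale :: 'k \<Rightarrow> (mpt \<Rightarrow>\<^sub>0 'k) \<Rightarrow> _" by (rule module_fscale)
  define R where "R a = (SOME y. tau0 y = a)" for a
  have R: "tau0 (R (tau0 x)) = tau0 x" for x unfolding R_def by (rule someI_ex) blast
  have one: "Poly_Mapping.single x 1 - Poly_Mapping.single (R (tau0 x)) (1::'k) \<in> mpt_commutators" for x
  proof -
    from tau0_fiber[OF R[of x, symmetric]] show ?thesis
    proof
      assume e: "x = R (tau0 x)"
      have "Poly_Mapping.single x (1::'k) = Poly_Mapping.single (R (tau0 x)) 1"
        using arg_cong[OF e, of "\<lambda>z. Poly_Mapping.single z (1::'k)"] .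
      then have "Poly_Mapping.single x 1 - Poly_Mapping.single (R (tau0 x)) (1::'k) = 0" by simp
      then show ?thesis unfolding mpt_commutators_def using M.span_zero by simp
    next
      assume "\<exists>a b. x = mpt_comp0 b a \<and> R (tau0 x) = mpt_comp0 a b"
      then obtain a b where e1: "x = mpt_comp0 b a" and e2: "R (tau0 x) = mpt_comp0 a b" by blast
      have "Poly_Mapping.single x 1 - Poly_Mapping.single (R (tau0 x)) (1::'k) =
         mpt_comp (Poly_Mapping.single b 1) (Poly_Mapping.single a 1) - mpt_comp (Poly_Mapping.single a 1) (Poly_Mapping.single b 1)"
        unfolding comp_singles e2 by (simp only: e1)
      then show ?thesis unfolding mpt_commutators_def by (intro M.span_base) blast
    qed
  qed
  have p0: "push (R \<circ> tau0) f = 0" using assms by (simp add: push_push[symmetric] tau_push)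
  have "f = f - push (R \<circ> tau0) f" using p0 by simp
  also have "\<dots> = (\<Sum>x\<in>Poly_Mapping.keys f. fscale (Poly_Mapping.lookup f x) (Poly_Mapping.single x 1 - Poly_Mapping.single (R (tau0 x)) 1))"
    apply (subst (1) sum_singles)
    apply (simp add: push_def sum_subtractf[symmetric])
    apply (simp add: M.scale_right_diff_distrib fscale_single)
    done
  also have "\<dots> \<in> mpt_commutators"
    unfolding mpt_commutators_def
    by (intro M.span_sum M.span_scale one[unfolded mpt_commutators_def])
  finally show ?thesis .
qed

lemma tau_surj: "surj (tau :: (mpt \<Rightarrow>\<^sub>0 'k::field) \<Rightarrow> _)"
proof -
  define pre where "pre a = (SOME x. tau0 x = a)" for a
  have pre: "tau0 (pre a) = a" for a
  proof -
    have "\<exists>x. tau0 x = a" using surjD[OF tau0_surj, of a] by (elim exE) (rule exI, rule sym)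
    then show ?thesis unfolding pre_def by (rule someI_ex)
  qed
  have "tau (push pre g) = g" for g :: "aroma \<Rightarrow>\<^sub>0 'k"
  proof -
    have "tau (push pre g) = push (tau0 \<circ> pre) g" by (simp add: tau_push push_push)
    also have "tau0 \<circ> pre = (\<lambda>x. x)" using pre by auto
    finally show ?thesis by (simp add: push_id)
  qed
  then show ?thesis by (rule surjI)
qed

theorem mainTheorem8:
  shows "surj (tau :: (mpt \<Rightarrow>\<^sub>0 'k::field) \<Rightarrow> (aroma \<Rightarrow>\<^sub>0 'k)) \<and>
         {f :: mpt \<Rightarrow>\<^sub>0 'k. tau f = 0} = mpt_commutators"
  using tau_surj span_sub_kernel kernel_sub_span by blast

end
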